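(* Let $G=(V,E)$ be a directed network with link set $A=E$. For each origin–destination (OD) pair $(o,d)$ let $K_{od}$ be a finite nonempty set of paths, $q_{od}\ge 0$ the demand, and $\delta^{od}_{a,k}\in\{0,1\}$ indicate whether path $k\in K_{od}$ uses link $a$. Let $\xi$ be a random network state, and for each link $a$ let $$t_a(x,\xi)=t_a^0(\xi)\Big[1+\alpha_a(\xi)\big(x/c_a(\xi)\big)^{\beta_a(\xi)}\Big]+\Delta_a(\xi),\qquad x\ge 0,$$ with $t_a^0(\xi)>0$, $c_a(\xi)>0$, $\alpha_a(\xi)\ge 0$, $\beta_a(\xi)\ge 1$, $\Delta_a(\xi)\ge 0$ (with all expectations below finite). Let $\theta>0$. For path flows $f=(f^{od}_k)$ define link flows $x_a=\sum_{o,d}\sum_{k\in K_{od}} f^{od}_k\delta^{od}_{a,k}$ and $$Z(f,\xi)=\sum_{a\in A}\int_0^{x_a} t_a(\omega,\xi)\,d\omega+\frac1\theta\sum_{o,d}\sum_{k\in K_{od}}\Big[(f^{od}_k+1)\ln(f^{od}_k+1)-f^{od}_k\Big].$$ Then the objective $f\mapsto \mathbb{E}[Z(f,\xi)]$ is convex on $\{f\ge 0\}$, and the problem of minimizing $\mathbb{E}[Z(f,\xi)]$ subject to $\sum_{k\in K_{od}} f^{od}_k=q_{od}$ for all $(o,d)$ and $f^{od}_k\ge 0$ has a unique optimal path flow vector.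
   Context: This is the truncated-logit stochastic user equilibrium (TSUE) program with an extended BPR link travel time function whose parameters depend on the random state $\xi$. *)

theory Defs
  imports "HOL-Probability.Probability"
begin

definition bpr_time :: "real \<Rightarrow> real \<Rightarrow> real \<Rightarrow> real \<Rightarrow> real \<Rightarrow> real \<Rightarrow> real" where
  "bpr_time t0 c \<alpha> \<beta> \<Delta> x = t0 * (1 + \<alpha> * (x / c) powr \<beta>) + \<Delta>"

definition link_flow ::
  "('w set) \<Rightarrow> ('w \<Rightarrow> 'k set) \<Rightarrow> ('w \<Rightarrow> 'a \<Rightarrow> 'k \<Rightarrow> bool) \<Rightarrow> ('w \<times> 'k \<Rightarrow> real) \<Rightarrow> 'a \<Rightarrow> real" where
  "link_flow W K \<delta> f a = (\<Sum>w\<in>W. \<Sum>k\<in>K w. f (w, k) * (if \<delta> w a k then 1 else 0))"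

definition tsue_Z ::
  "'a set \<Rightarrow> ('w set) \<Rightarrow> ('w \<Rightarrow> 'k set) \<Rightarrow> ('w \<Rightarrow> 'a \<Rightarrow> 'k \<Rightarrow> bool)
   \<Rightarrow> ('a \<Rightarrow> 's \<Rightarrow> real) \<Rightarrow> ('a \<Rightarrow> 's \<Rightarrow> real) \<Rightarrow> ('a \<Rightarrow> 's \<Rightarrow> real)
   \<Rightarrow> ('a \<Rightarrow> 's \<Rightarrow> real) \<Rightarrow> ('a \<Rightarrow> 's \<Rightarrow> real) \<Rightarrow> real
   \<Rightarrow> ('w \<times> 'k \<Rightarrow> real) \<Rightarrow> 's \<Rightarrow> real" where
  "tsue_Z A W K \<delta> t0 c \<alpha> \<beta> \<Delta> \<theta> f \<xi> =
     (\<Sum>a\<in>A. integral {0..link_flow W K \<delta> f a}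
                 (\<lambda>\<omega>. bpr_time (t0 a \<xi>) (c a \<xi>) (\<alpha> a \<xi>) (\<beta> a \<xi>) (\<Delta> a \<xi>) \<omega>))
     + (1 / \<theta>) * (\<Sum>w\<in>W. \<Sum>k\<in>K w. (f (w, k) + 1) * ln (f (w, k) + 1) - f (w, k))"

text \<open>Convexity of a real functional on a set of functions (written out, since function
  spaces are not instantiated as real vector spaces).\<close>
definition convex_fun_on :: "('p \<Rightarrow> real) set \<Rightarrow> (('p \<Rightarrow> real) \<Rightarrow> real) \<Rightarrow> bool" where
  "convex_fun_on S F \<longleftrightarrow>
     (\<forall>f\<in>S. \<forall>g\<in>S. \<forall>u::real. 0 \<le> u \<and> u \<le> 1 \<longrightarrow>
        (\<lambda>p. u * f p + (1 - u) * g p) \<in> S \<and>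
        F (\<lambda>p. u * f p + (1 - u) * g p) \<le> u * F f + (1 - u) * F g)"

end

theory Submission
  imports Defs
begin


lemma ln_strict: "0 < (x::real) \<Longrightarrow> x \<noteq> 1 \<Longrightarrow> ln x < x - 1"
  using ln_le_minus_one ln_eq_minus_one by fastforce

lemma ln_sub_le: assumes "0 < (s::real)" "0 < m" shows "s * ln m - s * ln s \<le> m - s"
proof -
  have "ln (m/s) \<le> m/s - 1" using assms by (intro ln_le_minus_one) simp
  then have "ln m - ln s \<le> m/s - 1" using assms by (simp add: ln_div)
  then have "s * (ln m - ln s) \<le> s * (m/s - 1)" using assms by (intro mult_left_mono) auto
  then show ?thesis using assms by (simp add: algebra_simps)
qed

lemma ln_sub_less: assumes "0 < (s::real)" "0 < m" "m \<noteq> s" shows "s * ln m - s * ln s < m - s"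
proof -
  have "ln (m/s) < m/s - 1" using assms by (intro ln_strict) auto
  then have "ln m - ln s < m/s - 1" using assms by (simp add: ln_div)
  then have "s * (ln m - ln s) < s * (m/s - 1)" using assms by (intro mult_strict_left_mono) auto
  then show ?thesis using assms by (simp add: algebra_simps)
qed

lemma xlnx_conv:
  fixes s t u :: real
  assumes "0 < s" "0 < t" "0 \<le> u" "u \<le> 1"
  shows "(u * s + (1-u) * t) * ln (u * s + (1-u) * t) \<le> u*(s*ln s) + (1-u)*(t*ln t)"
proof -
  define m where "m = u * s + (1-u) * t"
  have m: "0 < m" unfolding m_def using assms
    by (smt (verit, best) mult_nonneg_nonneg mult_pos_pos)
  have 1: "u * (s * ln m - s * ln s) \<le> u * (m - s)"
    using ln_sub_le[OF assms(1) m] assms by (intro mult_left_mono) auto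
  have 2: "(1-u) * (t * ln m - t * ln t) \<le> (1-u) * (m - t)"
    using ln_sub_le[OF assms(2) m] assms by (intro mult_left_mono) auto
  have "m * ln m = u * (s * ln m) + (1-u) * (t * ln m)" unfolding m_def by (simp add: algebra_simps)
  moreover have "u * (m - s) + (1-u) * (m - t) = 0" unfolding m_def by (simp add: algebra_simps)
  ultimately show ?thesis using 1 2 unfolding m_def[symmetric] by (simp add: algebra_simps)
qed

lemma xlnx_strict:
  fixes s t :: real
  assumes "0 < s" "0 < t" "s \<noteq> t"
  shows "((s+t)/2) * ln ((s+t)/2) < (s*ln s + t*ln t)/2"
proof -
  define m where "m = (s+t)/2"
  have m: "0 < m" "m \<noteq> s" "m \<noteq> t" unfolding m_def using assms by auto
  have 1: "s * ln m - s * ln s < m - s" using ln_sub_less[OF assms(1) m(1,2)] .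
  have 2: "t * ln m - t * ln t < m - t" using ln_sub_less[OF assms(2) m(1,3)] .
  have "m * ln m = (s * ln m + t * ln m)/2" unfolding m_def by (simp add: algebra_simps)
  then show ?thesis using 1 2 unfolding m_def[symmetric] by (simp add: m_def field_simps)
qed

definition phi :: "real \<Rightarrow> real" where "phi y = (y+1) * ln (y+1) - y"

lemma phi_conv: assumes "0 \<le> a" "0 \<le> b" "0 \<le> u" "u \<le> 1"
  shows "phi (u * a + (1-u) * b) \<le> u * phi a + (1-u) * phi b"
proof -
  have e: "u * a + (1-u) * b + 1 = u*(a+1)+(1-u)*(b+1)" by (simp add: algebra_simps)
  show ?thesis using xlnx_conv[of "a+1" "b+1" u] assms unfolding phi_def e
    by (simp add: algebra_simps)
qed

lemma phi_strict: assumes "0 \<le> a" "0 \<le> b" "a \<noteq> b"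
  shows "phi ((a+b)/2) < (phi a + phi b)/2"
proof -
  have e: "(a+b)/2 + 1 = ((a+1)+(b+1))/2" by (simp add: algebra_simps)
  have "((a+1)+(b+1))/2 * ln (((a+1)+(b+1))/2) < ((a+1)*ln (a+1) + (b+1)*ln (b+1))/2"
    using xlnx_strict[of "a+1" "b+1"] assms by simp
  then show ?thesis unfolding phi_def e by (simp add: field_simps)
qed

lemma phi_mono: assumes "0 \<le> a" "a \<le> b" shows "phi a \<le> phi b"
proof -
  have l: "0 \<le> ln (a+1)" using assms by simp
  have "(b+1) * ln (a+1) - (b+1) * ln (b+1) \<le> (a+1) - (b+1)"
    using ln_sub_le[of "b+1" "a+1"] assms by simp
  then have "(b+1) * ln (b+1) - (a+1) * ln (a+1) \<ge> (b - a) + (b - a) * ln (a+1)"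
    by (simp add: algebra_simps)
  moreover have "(b - a) * ln (a+1) \<ge> 0" using assms l by simp
  ultimately show ?thesis unfolding phi_def by linarith
qed

lemma phi_nonneg: "0 \<le> a \<Longrightarrow> 0 \<le> phi a"
  using phi_mono[of 0 a] by (simp add: phi_def)

definition Gint :: "(real \<Rightarrow> real) \<Rightarrow> real \<Rightarrow> real" where
  "Gint h x = integral {0..x} h"

locale mono_cont =
  fixes h :: "real \<Rightarrow> real"
  assumes cont: "continuous_on {0..} h"
    and mono: "\<And>x y. 0 \<le> x \<Longrightarrow> x \<le> y \<Longrightarrow> h x \<le> h y"
    and nonneg: "\<And>x. 0 \<le> x \<Longrightarrow> 0 \<le> h x"
begin

abbreviation G where "G \<equiv> Gint h"

lemma G_def: "G x = integral {0..x} h" by (simp add: Gint_def)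

lemma intg: "0 \<le> a \<Longrightarrow> h integrable_on {a..b}"
  by (rule integrable_continuous_real, rule continuous_on_subset[OF cont]) auto

lemma Gdiff: "0 \<le> a \<Longrightarrow> a \<le> b \<Longrightarrow> G b - G a = integral {a..b} h"
proof -
  assume a: "0 \<le> a" "a \<le> b"
  have "integral {0..a} h + integral {a..b} h = integral {0..b} h"
    by (rule Henstock_Kurzweil_Integration.integral_combine) (use a intg in auto)
  then show ?thesis unfolding G_def by simp
qed

lemma Glow: assumes "0 \<le> a" "a \<le> b" shows "(b - a) * h a \<le> G b - G a"
proof -
  have "integral {a..b} (\<lambda>x. h a) \<le> integral {a..b} h"
    by (rule integral_le) (use assms intg in \<open>auto intro: mono\<close>)
  then show ?thesis using Gdiff[OF assms] assms by simp
qed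

lemma Gup: assumes "0 \<le> a" "a \<le> b" shows "G b - G a \<le> (b - a) * h b"
proof -
  have "integral {a..b} h \<le> integral {a..b} (\<lambda>x. h b)"
    by (rule integral_le) (use assms intg in \<open>auto intro: mono\<close>)
  then show ?thesis using Gdiff[OF assms] assms by simp
qed

lemma Gmono: "0 \<le> a \<Longrightarrow> a \<le> b \<Longrightarrow> G a \<le> G b"
  using Glow[of a b] nonneg[of a] by (smt (verit) mult_nonneg_nonneg)

lemma Gnonneg: "0 \<le> a \<Longrightarrow> 0 \<le> G a"
  using Gmono[of 0 a] by (simp add: G_def)

lemma Gconv_aux: assumes "0 \<le> x" "x \<le> y" "0 \<le> u" "u \<le> 1"
  shows "G (u * x + (1-u) * y) \<le> u * G x + (1-u) * G y"
proof -
  define z where "z = u * x + (1-u) * y"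
  have "0 \<le> (1-u)*(y-x)" "0 \<le> u*(y-x)" using assms by auto
  then have xz: "x \<le> z" and zy: "z \<le> y" unfolding z_def by (simp_all add: algebra_simps)
  have 1: "(y - z) * h z \<le> G y - G z" using Glow[of z y] xz zy assms by simp
  have 2: "G z - G x \<le> (z - x) * h z" using Gup[of x z] xz assms by simp
  have 3: "(1-u) * ((y - z) * h z) \<le> (1-u) * (G y - G z)" using 1 assms by (intro mult_left_mono) auto
  have 4: "u * (G z - G x) \<le> u * ((z - x) * h z)" using 2 assms by (intro mult_left_mono) auto
  have 5: "(1-u) * ((y - z) * h z) = u * ((z - x) * h z)" unfolding z_def by (simp add: algebra_simps)
  show ?thesis using 3 4 5 unfolding z_def[symmetric] by (simp add: algebra_simps)
qed

lemma Gconv: assumes "0 \<le> x" "0 \<le> y" "0 \<le> u" "u \<le> 1"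
  shows "G (u * x + (1-u) * y) \<le> u * G x + (1-u) * G y"
proof (cases "x \<le> y")
  case True then show ?thesis using Gconv_aux assms by auto
next
  case False
  then have "G ((1-u) * y + (1-(1-u)) * x) \<le> (1-u) * G y + (1-(1-u)) * G x"
    using Gconv_aux[of y x "1-u"] assms by auto
  then show ?thesis by (simp add: algebra_simps)
qed

lemma Gcont: "continuous_on {0..L} G"
  unfolding G_def by (rule indefinite_integral_continuous_1, rule intg) simp

end

lemma bpr_mono_cont:
  assumes "0 < t0" "0 < c" "0 \<le> \<alpha>" "1 \<le> \<beta>" "0 \<le> \<Delta>"
  shows "mono_cont (bpr_time t0 c \<alpha> \<beta> \<Delta>)"
proof
  show "continuous_on {0..} (bpr_time t0 c \<alpha> \<beta> \<Delta>)"
    unfolding bpr_time_def using assms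
    by (intro continuous_intros continuous_on_powr') auto
next
  fix x y :: real assume "0 \<le> x" "x \<le> y"
  then have "(x / c) powr \<beta> \<le> (y / c) powr \<beta>" using assms
    by (intro powr_mono2) (auto simp: divide_right_mono)
  then show "bpr_time t0 c \<alpha> \<beta> \<Delta> x \<le> bpr_time t0 c \<alpha> \<beta> \<Delta> y"
    unfolding bpr_time_def using assms by (simp add: mult_left_mono)
next
  fix x :: real assume "0 \<le> x"
  then show "0 \<le> bpr_time t0 c \<alpha> \<beta> \<Delta> x"
    unfolding bpr_time_def using assms by simp
qed

definition Hh :: "('w set) \<Rightarrow> ('w \<Rightarrow> 'k set) \<Rightarrow> ('w \<times> 'k \<Rightarrow> real) \<Rightarrow> real" where
  "Hh W K f = (\<Sum>w\<in>W. \<Sum>k\<in>K w. phi (f (w, k)))"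

lemma lf_lin: "link_flow W K \<delta> (\<lambda>p. u * f p + (1-u) * g p) a
   = u * link_flow W K \<delta> f a + (1-u) * link_flow W K \<delta> g a"
proof -
  have "link_flow W K \<delta> (\<lambda>p. u * f p + (1-u) * g p) a = (\<Sum>w\<in>W. \<Sum>k\<in>K w.
     u * (f (w, k) * (if \<delta> w a k then 1 else 0)) + (1-u) * (g (w, k) * (if \<delta> w a k then 1 else 0)))"
    unfolding link_flow_def by (intro sum.cong) (auto simp: algebra_simps)
  also have "\<dots> = u * link_flow W K \<delta> f a + (1-u) * link_flow W K \<delta> g a"
    unfolding link_flow_def by (simp add: sum.distrib sum_distrib_left)
  finally show ?thesis .
qed

lemma lf_nonneg: "\<forall>p\<in>Sigma W K. 0 \<le> f p \<Longrightarrow> 0 \<le> link_flow W K \<delta> f a"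
  unfolding link_flow_def by (intro sum_nonneg) auto

lemma lf_mono: "\<forall>p\<in>Sigma W K. f p \<le> g p \<Longrightarrow> link_flow W K \<delta> f a \<le> link_flow W K \<delta> g a"
  unfolding link_flow_def by (intro sum_mono) auto

lemma lf_tendsto: "(\<And>p. p \<in> Sigma W K \<Longrightarrow> (\<lambda>n. X n p) \<longlonglongrightarrow> f p) \<Longrightarrow>
   (\<lambda>n. link_flow W K \<delta> (X n) a) \<longlonglongrightarrow> link_flow W K \<delta> f a"
  unfolding link_flow_def by (intro tendsto_sum tendsto_mult tendsto_const) auto

lemma Hh_conv: "\<forall>p\<in>Sigma W K. 0 \<le> f p \<Longrightarrow> \<forall>p\<in>Sigma W K. 0 \<le> g p \<Longrightarrow> 0 \<le> u \<Longrightarrow> u \<le> 1 \<Longrightarrow>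
  Hh W K (\<lambda>p. u * f p + (1-u) * g p) \<le> u * Hh W K f + (1-u) * Hh W K g"
  unfolding Hh_def sum_distrib_left sum.distrib[symmetric]
  by (intro sum_mono phi_conv) auto

lemma Hh_mono: "\<forall>p\<in>Sigma W K. 0 \<le> f p \<and> f p \<le> g p \<Longrightarrow> Hh W K f \<le> Hh W K g"
  unfolding Hh_def by (intro sum_mono phi_mono) auto

lemma Hh_nonneg: "\<forall>p\<in>Sigma W K. 0 \<le> f p \<Longrightarrow> 0 \<le> Hh W K f"
  unfolding Hh_def by (intro sum_nonneg phi_nonneg) auto

lemma phi_tendsto: "X \<longlonglongrightarrow> y \<Longrightarrow> 0 \<le> y \<Longrightarrow> (\<lambda>n. phi (X n)) \<longlonglongrightarrow> phi y"
  unfolding phi_def by (intro tendsto_intros) auto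

lemma Hh_tendsto: "(\<And>p. p \<in> Sigma W K \<Longrightarrow> (\<lambda>n. X n p) \<longlonglongrightarrow> f p) \<Longrightarrow> \<forall>p\<in>Sigma W K. 0 \<le> f p \<Longrightarrow>
   (\<lambda>n. Hh W K (X n)) \<longlonglongrightarrow> Hh W K f"
  unfolding Hh_def by (intro tendsto_sum phi_tendsto) auto

lemma Hh_strict:
  assumes "finite W" "\<And>w. w \<in> W \<Longrightarrow> finite (K w)"
    "\<forall>p\<in>Sigma W K. 0 \<le> f p" "\<forall>p\<in>Sigma W K. 0 \<le> g p" "p \<in> Sigma W K" "f p \<noteq> g p"
  shows "Hh W K (\<lambda>p. 1/2 * f p + (1 - 1/2) * g p) < (Hh W K f + Hh W K g) / 2"
proof -
  have e: "(Hh W K f + Hh W K g) / 2 = (\<Sum>w\<in>W. \<Sum>k\<in>K w. (phi (f (w,k)) + phi (g (w,k)))/2)"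
    unfolding Hh_def by (simp add: sum.distrib flip: sum_divide_distrib)
  have m: "1/2 * a + (1 - 1/2) * b = (a + b)/2" for a b :: real by simp
  obtain w0 k0 where p: "p = (w0, k0)" "w0 \<in> W" "k0 \<in> K w0" using assms(5) by auto
  show ?thesis unfolding e unfolding Hh_def m
  proof (rule sum_strict_mono_ex1[OF assms(1)])
    show "\<forall>w\<in>W. (\<Sum>k\<in>K w. phi ((f (w, k) + g (w, k)) / 2)) \<le> (\<Sum>k\<in>K w. (phi (f (w, k)) + phi (g (w, k))) / 2)"
      using assms phi_conv[of "f _" "g _" "1/2"] by (intro ballI sum_mono) (auto simp: m add_divide_distrib)
    show "\<exists>w\<in>W. (\<Sum>k\<in>K w. phi ((f (w, k) + g (w, k)) / 2)) < (\<Sum>k\<in>K w. (phi (f (w, k)) + phi (g (w, k))) / 2)"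
    proof (intro bexI[OF _ p(2)] sum_strict_mono_ex1)
      show "finite (K w0)" using assms p by auto
      show "\<forall>k\<in>K w0. phi ((f (w0, k) + g (w0, k)) / 2) \<le> (phi (f (w0, k)) + phi (g (w0, k))) / 2"
        using assms p phi_conv[of "f _" "g _" "1/2"] by (auto simp: m add_divide_distrib)
      show "\<exists>k\<in>K w0. phi ((f (w0, k) + g (w0, k)) / 2) < (phi (f (w0, k)) + phi (g (w0, k))) / 2"
        using assms p by (intro bexI[OF _ p(3)] phi_strict) auto
    qed
  qed
qed



theorem proposition1:
  fixes V :: "'v set" and E :: "('v \<times> 'v) set"
    and W :: "('v \<times> 'v) set" and K :: "'v \<times> 'v \<Rightarrow> 'k set"
    and q :: "'v \<times> 'v \<Rightarrow> real"
    and \<delta> :: "'v \<times> 'v \<Rightarrow> 'v \<times> 'v \<Rightarrow> 'k \<Rightarrow> bool"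
    and M :: "'s measure"
    and t0 c \<alpha> \<beta> \<Delta> :: "'v \<times> 'v \<Rightarrow> 's \<Rightarrow> real"
    and \<theta> :: real
  assumes finV: "finite V" and E_sub: "E \<subseteq> V \<times> V"
    and W_sub: "W \<subseteq> V \<times> V"
    and finK: "\<And>w. w \<in> W \<Longrightarrow> finite (K w)"
    and neK: "\<And>w. w \<in> W \<Longrightarrow> K w \<noteq> {}"
    and q_nonneg: "\<And>w. w \<in> W \<Longrightarrow> q w \<ge> 0"
    and P: "prob_space M"
    and t0_pos: "\<And>a \<xi>. a \<in> E \<Longrightarrow> \<xi> \<in> space M \<Longrightarrow> t0 a \<xi> > 0"
    and c_pos: "\<And>a \<xi>. a \<in> E \<Longrightarrow> \<xi> \<in> space M \<Longrightarrow> c a \<xi> > 0"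
    and \<alpha>_nonneg: "\<And>a \<xi>. a \<in> E \<Longrightarrow> \<xi> \<in> space M \<Longrightarrow> \<alpha> a \<xi> \<ge> 0"
    and \<beta>_ge1: "\<And>a \<xi>. a \<in> E \<Longrightarrow> \<xi> \<in> space M \<Longrightarrow> \<beta> a \<xi> \<ge> 1"
    and \<Delta>_nonneg: "\<And>a \<xi>. a \<in> E \<Longrightarrow> \<xi> \<in> space M \<Longrightarrow> \<Delta> a \<xi> \<ge> 0"
    and \<theta>_pos: "\<theta> > 0"
    and integrable_Z: "\<And>f. (\<forall>p\<in>Sigma W K. f p \<ge> 0) \<Longrightarrow>
           integrable M (tsue_Z E W K \<delta> t0 c \<alpha> \<beta> \<Delta> \<theta> f)"
  shows "convex_fun_on {f. \<forall>p\<in>Sigma W K. f p \<ge> 0}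
           (\<lambda>f. integral\<^sup>L M (tsue_Z E W K \<delta> t0 c \<alpha> \<beta> \<Delta> \<theta> f))
         \<and> (\<exists>!f. (\<forall>p. p \<notin> Sigma W K \<longrightarrow> f p = 0)
                 \<and> (\<forall>w\<in>W. (\<Sum>k\<in>K w. f (w, k)) = q w)
                 \<and> (\<forall>p\<in>Sigma W K. f p \<ge> 0)
                 \<and> (\<forall>g. (\<forall>p. p \<notin> Sigma W K \<longrightarrow> g p = 0)
                        \<and> (\<forall>w\<in>W. (\<Sum>k\<in>K w. g (w, k)) = q w)
                        \<and> (\<forall>p\<in>Sigma W K. g p \<ge> 0)
                        \<longrightarrow> integral\<^sup>L M (tsue_Z E W K \<delta> t0 c \<alpha> \<beta> \<Delta> \<theta> f)
                            \<le> integral\<^sup>L M (tsue_Z E W K \<delta> t0 c \<alpha> \<beta> \<Delta> \<theta> g)))"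
  proof -
  interpret P: prob_space M by (rule P)
  have finW: "finite W" using finite_subset[OF W_sub] finV by auto
  define hh where "hh a \<xi> = bpr_time (t0 a \<xi>) (c a \<xi>) (\<alpha> a \<xi>) (\<beta> a \<xi>) (\<Delta> a \<xi>)" for a \<xi>
  have MC: "mono_cont (hh a \<xi>)" if "a \<in> E" "\<xi> \<in> space M" for a \<xi>
    unfolding hh_def using that by (intro bpr_mono_cont t0_pos c_pos \<alpha>_nonneg \<beta>_ge1 \<Delta>_nonneg)
  define Ip where "Ip f \<xi> = (\<Sum>a\<in>E. Gint (hh a \<xi>) (link_flow W K \<delta> f a))" for f \<xi>
  define Z where "Z f = tsue_Z E W K \<delta> t0 c \<alpha> \<beta> \<Delta> \<theta> f" for f
  define \<Phi> where "\<Phi> f = integral\<^sup>L M (Z f)" for f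
  have Zeq: "Z f \<xi> = Ip f \<xi> + (1/\<theta>) * Hh W K f" for f \<xi>
    unfolding Z_def tsue_Z_def Ip_def Hh_def hh_def phi_def by (simp add: Gint_def)
  have intZ: "integrable M (Z f)" if "\<forall>p\<in>Sigma W K. 0 \<le> f p" for f
    using integrable_Z[OF that] unfolding Z_def .
  have Ip_conv: "Ip (\<lambda>p. u * f p + (1-u) * g p) \<xi> \<le> u * Ip f \<xi> + (1-u) * Ip g \<xi>"
    if "\<forall>p\<in>Sigma W K. 0 \<le> f p" "\<forall>p\<in>Sigma W K. 0 \<le> g p" "0 \<le> u" "u \<le> 1" "\<xi> \<in> space M" for f g u \<xi>
    unfolding Ip_def lf_lin sum_distrib_left sum.distrib[symmetric]
    using that by (intro sum_mono mono_cont.Gconv[OF MC] lf_nonneg) auto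
  have Z_conv: "Z (\<lambda>p. u * f p + (1-u) * g p) \<xi> \<le> u * Z f \<xi> + (1-u) * Z g \<xi>"
    if "\<forall>p\<in>Sigma W K. 0 \<le> f p" "\<forall>p\<in>Sigma W K. 0 \<le> g p" "0 \<le> u" "u \<le> 1" "\<xi> \<in> space M" for f g u \<xi>
  proof -
    have "Hh W K (\<lambda>p. u * f p + (1-u) * g p) \<le> u * Hh W K f + (1-u) * Hh W K g"
      using Hh_conv that by blast
    then have "(1/\<theta>) * Hh W K (\<lambda>p. u * f p + (1-u) * g p) \<le> (1/\<theta>) * (u * Hh W K f + (1-u) * Hh W K g)"
      using \<theta>_pos by (intro mult_left_mono) auto
    moreover have "u * Z f \<xi> + (1-u) * Z g \<xi> = (u * Ip f \<xi> + (1-u) * Ip g \<xi>)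
        + (1/\<theta>) * (u * Hh W K f + (1-u) * Hh W K g)" unfolding Zeq using \<theta>_pos by (simp add: field_simps)
    ultimately show ?thesis unfolding Zeq using Ip_conv[OF that] by linarith
  qed
  have Ip_mono: "Ip f \<xi> \<le> Ip g \<xi>" if "\<forall>p\<in>Sigma W K. 0 \<le> f p \<and> f p \<le> g p" "\<xi> \<in> space M" for f g \<xi>
    unfolding Ip_def using that by (intro sum_mono mono_cont.Gmono[OF MC] lf_nonneg lf_mono) auto
  have Ip_nonneg: "0 \<le> Ip f \<xi>" if "\<forall>p\<in>Sigma W K. 0 \<le> f p" "\<xi> \<in> space M" for f \<xi>
    unfolding Ip_def using that by (intro sum_nonneg mono_cont.Gnonneg[OF MC] lf_nonneg) auto
  have Z_mono: "Z f \<xi> \<le> Z g \<xi>" if "\<forall>p\<in>Sigma W K. 0 \<le> f p \<and> f p \<le> g p" "\<xi> \<in> space M" for f g \<xi>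
  proof -
    have "(1/\<theta>) * Hh W K f \<le> (1/\<theta>) * Hh W K g"
      using Hh_mono[OF that(1)] \<theta>_pos by (intro mult_left_mono) auto
    then show ?thesis unfolding Zeq using Ip_mono[OF that] by simp
  qed
  have Z_nonneg: "0 \<le> Z f \<xi>" if "\<forall>p\<in>Sigma W K. 0 \<le> f p" "\<xi> \<in> space M" for f \<xi>
    unfolding Zeq using Ip_nonneg[OF that] Hh_nonneg[OF that(1)] \<theta>_pos by simp
  have conv: "convex_fun_on {f. \<forall>p\<in>Sigma W K. f p \<ge> 0} \<Phi>"
    unfolding convex_fun_on_def
  proof (intro ballI allI impI conjI)
    fix f g :: "('v \<times> 'v) \<times> 'k \<Rightarrow> real" and u :: real
    assume f: "f \<in> {f. \<forall>p\<in>Sigma W K. f p \<ge> 0}" and g: "g \<in> {f. \<forall>p\<in>Sigma W K. f p \<ge> 0}"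
      and u: "0 \<le> u \<and> u \<le> 1"
    show "(\<lambda>p. u * f p + (1-u) * g p) \<in> {f. \<forall>p\<in>Sigma W K. f p \<ge> 0}" using f g u by auto
    have i1: "integrable M (\<lambda>\<xi>. u * Z f \<xi> + (1-u) * Z g \<xi>)"
      using intZ f g by auto
    have "\<Phi> (\<lambda>p. u * f p + (1-u) * g p) \<le> integral\<^sup>L M (\<lambda>\<xi>. u * Z f \<xi> + (1-u) * Z g \<xi>)"
      unfolding \<Phi>_def using f g u i1
      by (intro integral_mono intZ Z_conv) auto
    also have "\<dots> = u * \<Phi> f + (1-u) * \<Phi> g"
      unfolding \<Phi>_def using f g
      by (subst Bochner_Integration.integral_add) (auto intro: intZ)
    finally show "\<Phi> (\<lambda>p. u * f p + (1-u) * g p) \<le> u * \<Phi> f + (1-u) * \<Phi> g" .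
  qed
  define Fs where "Fs = {f. (\<forall>p. p \<notin> Sigma W K \<longrightarrow> f p = 0) \<and> (\<forall>w\<in>W. (\<Sum>k\<in>K w. f (w, k)) = q w)
                 \<and> (\<forall>p\<in>Sigma W K. f p \<ge> 0)}"
  define B where "B = (\<Sum>w\<in>W. q w)"
  have B0: "0 \<le> B" unfolding B_def using q_nonneg by (intro sum_nonneg) auto
  have Fs_bound: "f p \<le> B" if fF: "f \<in> Fs" and pS: "p \<in> Sigma W K" for f p
  proof -
    obtain w k where p: "p = (w,k)" "w \<in> W" "k \<in> K w" using pS by auto
    have "f (w,k) \<le> (\<Sum>k\<in>K w. f (w, k))" using fF finK p unfolding Fs_def by (intro member_le_sum) auto
    also have "\<dots> = q w" using fF p unfolding Fs_def by auto
    also have "\<dots> \<le> B" unfolding B_def using q_nonneg p finW by (intro member_le_sum) auto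
    finally show ?thesis using p by simp
  qed
  define gB where "gB = (\<lambda>p::('v\<times>'v)\<times>'k. B)"
  have gB0: "\<forall>p\<in>Sigma W K. 0 \<le> gB p" using B0 gB_def by auto
  have ZB: "Z f \<xi> \<le> Z gB \<xi>" if "f \<in> Fs" "\<xi> \<in> space M" for f \<xi>
    using Z_mono Fs_bound that unfolding Fs_def gB_def by auto
  define f0 where "f0 = (\<lambda>(w,k). if w \<in> W \<and> k = (SOME k. k \<in> K w) then q w else 0)"
  have f0: "f0 \<in> Fs"
  proof -
    have sk: "(SOME k. k \<in> K w) \<in> K w" if "w \<in> W" for w using neK[OF that] by (simp add: some_in_eq)
    show ?thesis unfolding Fs_def f0_def using sk q_nonneg finK by (auto simp: sum.delta)
  qed
  define v where "v = Inf (\<Phi> ` Fs)"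
  have \<Phi>0: "0 \<le> \<Phi> f" if "f \<in> Fs" for f
    unfolding \<Phi>_def using that Z_nonneg by (intro Bochner_Integration.integral_nonneg) (auto simp: Fs_def)
  have bdd: "bdd_below (\<Phi> ` Fs)" using \<Phi>0 by (intro bdd_belowI[of _ 0]) auto
  have vle: "v \<le> \<Phi> g" if "g \<in> Fs" for g unfolding v_def using bdd that by (intro cInf_lower) auto
  have "\<forall>n. \<exists>f. f \<in> Fs \<and> \<Phi> f < v + inverse (real (Suc n))"
  proof
    fix n
    have "Inf (\<Phi> ` Fs) < v + inverse (real (Suc n))" unfolding v_def by simp
    from cInf_lessD[OF _ this] obtain y where "y \<in> \<Phi> ` Fs" "y < v + inverse (real (Suc n))"
      using f0 by blast
    then show "\<exists>f. f \<in> Fs \<and> \<Phi> f < v + inverse (real (Suc n))" by auto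
  qed
  then obtain fs where fs: "\<And>n. fs n \<in> Fs" "\<And>n. \<Phi> (fs n) < v + inverse (real (Suc n))" by metis
  have fsnn: "0 \<le> fs n p" if "p \<in> Sigma W K" for n p using fs(1)[of n] that unfolding Fs_def by auto
  have fsB: "fs n p \<le> B" if "p \<in> Sigma W K" for n p using Fs_bound fs(1) that by auto
  have "\<forall>d\<subseteq>Sigma W K. \<exists>l0. \<exists>r. strict_mono r \<and>
      (\<forall>e>0. eventually (\<lambda>n. \<forall>i\<in>d. dist (fs (r n) i) (l0 i) < e) sequentially)"
  proof (rule compact_lemma_general[where f=fs and basis="Sigma W K" and proj="\<lambda>f p. f p" and unproj="\<lambda>e. e"])
    show "finite (Sigma W K)" using finW finK by auto
    fix k assume "k \<in> Sigma W K"
    then show "bounded ((\<lambda>x. x k) ` range fs)"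
      using fsnn fsB by (intro bounded_subset[OF bounded_closed_interval[of 0 B]]) auto
  qed auto
  from this[rule_format, OF order_refl] obtain l0 r where r: "strict_mono r"
    and cv: "\<forall>e>0. eventually (\<lambda>n. \<forall>i\<in>Sigma W K. dist (fs (r n) i) (l0 i) < e) sequentially"
    by blast
  define l where "l p = (if p \<in> Sigma W K then l0 p else 0)" for p
  have lim: "(\<lambda>n. fs (r n) p) \<longlonglongrightarrow> l p" if "p \<in> Sigma W K" for p
  proof (rule tendstoI)
    fix e :: real assume "0 < e"
    then have "eventually (\<lambda>n. \<forall>i\<in>Sigma W K. dist (fs (r n) i) (l0 i) < e) sequentially" using cv by blast
    then show "eventually (\<lambda>n. dist (fs (r n) p) (l p) < e) sequentially"
      by eventually_elim (use that in \<open>auto simp: l_def\<close>)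
  qed
  have lnn: "\<forall>p\<in>Sigma W K. 0 \<le> l p"
  proof
    fix p assume p: "p \<in> Sigma W K"
    show "0 \<le> l p" by (rule LIMSEQ_le_const[OF lim[OF p]]) (use fsnn p in auto)
  qed
  have lF: "l \<in> Fs"
  proof -
    have "(\<Sum>k\<in>K w. l (w, k)) = q w" if w: "w \<in> W" for w
    proof -
      have "(\<lambda>n. \<Sum>k\<in>K w. fs (r n) (w, k)) \<longlonglongrightarrow> (\<Sum>k\<in>K w. l (w, k))"
        by (intro tendsto_sum lim) (use w in auto)
      moreover have "(\<lambda>n. \<Sum>k\<in>K w. fs (r n) (w, k)) = (\<lambda>n. q w)"
        using fs(1) w unfolding Fs_def by auto
      ultimately show ?thesis using LIMSEQ_unique tendsto_const by metis
    qed
    then show ?thesis unfolding Fs_def using lnn by (auto simp: l_def)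
  qed
  have Glim: "(\<lambda>n. Gint (hh a \<xi>) (link_flow W K \<delta> (fs (r n)) a))
      \<longlonglongrightarrow> Gint (hh a \<xi>) (link_flow W K \<delta> l a)" if "a \<in> E" "\<xi> \<in> space M" for a \<xi>
  proof (rule continuous_on_tendsto_compose[OF mono_cont.Gcont[OF MC[OF that], of "link_flow W K \<delta> gB a"]])
    show "(\<lambda>n. link_flow W K \<delta> (fs (r n)) a) \<longlonglongrightarrow> link_flow W K \<delta> l a"
      by (rule lf_tendsto) (rule lim)
    show "link_flow W K \<delta> l a \<in> {0..link_flow W K \<delta> gB a}"
      using lnn lF Fs_bound by (auto intro!: lf_nonneg lf_mono simp: gB_def)
    show "\<forall>\<^sub>F n in sequentially. link_flow W K \<delta> (fs (r n)) a \<in> {0..link_flow W K \<delta> gB a}"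
      by (intro always_eventually allI) (use fsnn fsB in \<open>auto intro!: lf_nonneg lf_mono simp: gB_def\<close>)
  qed
  have Zlim: "(\<lambda>n. Z (fs (r n)) \<xi>) \<longlonglongrightarrow> Z l \<xi>" if "\<xi> \<in> space M" for \<xi>
    unfolding Zeq Ip_def
    by (intro tendsto_add tendsto_mult tendsto_const tendsto_sum Hh_tendsto lim Glim lnn that)
  have \<Phi>lim: "(\<lambda>n. \<Phi> (fs (r n))) \<longlonglongrightarrow> \<Phi> l" unfolding \<Phi>_def
  proof (rule integral_dominated_convergence[where w="Z gB"])
    show "Z l \<in> borel_measurable M" using intZ[OF lnn] by auto
    show "Z (fs (r n)) \<in> borel_measurable M" for n using intZ fsnn by auto
    show "integrable M (Z gB)" using intZ[OF gB0] .
    show "AE \<xi> in M. (\<lambda>n. Z (fs (r n)) \<xi>) \<longlonglongrightarrow> Z l \<xi>" using Zlim by (intro AE_I2)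
    show "AE \<xi> in M. norm (Z (fs (r n)) \<xi>) \<le> Z gB \<xi>" for n
      using Z_nonneg fsnn ZB fs(1) by (intro AE_I2) auto
  qed
  have "(\<lambda>n. inverse (real (Suc (r n)))) \<longlonglongrightarrow> 0"
    using LIMSEQ_subseq_LIMSEQ[OF LIMSEQ_inverse_real_of_nat r] by (simp add: o_def)
  then have Ylim: "(\<lambda>n. v + inverse (real (Suc (r n)))) \<longlonglongrightarrow> v + 0"
    by (intro tendsto_add tendsto_const)
  have "\<forall>n. \<Phi> (fs (r n)) \<le> v + inverse (real (Suc (r n)))" using fs(2) less_imp_le by blast
  then have lv: "\<Phi> l \<le> v" using LIMSEQ_le[OF \<Phi>lim Ylim] by simp
  have lmin: "\<Phi> l \<le> \<Phi> g" if "g \<in> Fs" for g using lv vle[OF that] by simp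
  have uniq: "y = l" if y: "y \<in> Fs" and ymin: "\<forall>g\<in>Fs. \<Phi> y \<le> \<Phi> g" for y
  proof (rule ccontr)
    assume "y \<noteq> l"
    then obtain p where p: "y p \<noteq> l p" by (metis ext)
    have "p \<notin> Sigma W K \<Longrightarrow> y p = 0 \<and> l p = 0" using y lF unfolding Fs_def by blast
    then have pS: "p \<in> Sigma W K" using p by (metis (mono_tags))
    have ynn: "\<forall>p\<in>Sigma W K. 0 \<le> y p" using y unfolding Fs_def by auto
    define m where "m = (\<lambda>p. 1/2 * y p + (1-1/2) * l p)"
    have msum: "(\<Sum>k\<in>K w. m (w,k)) = q w" if w: "w \<in> W" for w
    proof -
      have "(\<Sum>k\<in>K w. m (w,k)) = 1/2 * (\<Sum>k\<in>K w. y (w,k)) + (1-1/2) * (\<Sum>k\<in>K w. l (w,k))"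
        by (simp only: m_def sum.distrib sum_distrib_left)
      also have "\<dots> = q w" using y lF w unfolding Fs_def by simp
      finally show ?thesis .
    qed
    have "m p = 0" if "p \<notin> Sigma W K" for p
    proof -
      have "y p = 0" "l p = 0" using y lF that unfolding Fs_def by blast+
      then show ?thesis unfolding m_def by simp
    qed
    moreover have "0 \<le> m p" if "p \<in> Sigma W K" for p
    proof -
      have "0 \<le> y p" "0 \<le> l p" using y lF that unfolding Fs_def by blast+
      then show ?thesis unfolding m_def by simp
    qed
    ultimately have mF: "m \<in> Fs" using msum unfolding Fs_def by blast
    define \<epsilon> where "\<epsilon> = (1/\<theta>) * ((Hh W K y + Hh W K l)/2 - Hh W K m)"
    have "0 < \<epsilon>" unfolding \<epsilon>_def m_def
      using Hh_strict[OF finW finK ynn lnn pS p] \<theta>_pos by simp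
    have pt: "Z m \<xi> \<le> 1/2 * Z y \<xi> + (1-1/2) * Z l \<xi> - \<epsilon>" if "\<xi> \<in> space M" for \<xi>
    proof -
      have alg: "(1/2 * (a1 + c*h1) + (1-1/2)*(a2 + c*h2)) - c*((h1+h2)/2 - hm)
          = (1/2*a1 + (1-1/2)*a2) + c*hm" for a1 a2 h1 h2 hm c :: real by (simp add: field_simps)
      have h: "0 \<le> (1/2::real)" "(1/2::real) \<le> 1" by simp_all
      have "Ip m \<xi> \<le> 1/2 * Ip y \<xi> + (1-1/2) * Ip l \<xi>"
        using Ip_conv[OF ynn lnn h that] unfolding m_def .
      then show ?thesis unfolding Zeq \<epsilon>_def
        using alg[of "Ip y \<xi>" "1/\<theta>" "Hh W K y" "Ip l \<xi>" "Hh W K l" "Hh W K m"] by linarith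
    qed
    have "\<Phi> m \<le> integral\<^sup>L M (\<lambda>\<xi>. 1/2 * Z y \<xi> + (1-1/2) * Z l \<xi> - \<epsilon>)"
      unfolding \<Phi>_def
    proof (rule integral_mono)
      show "integrable M (Z m)" using mF by (intro intZ) (auto simp: Fs_def)
      show "integrable M (\<lambda>\<xi>. 1/2 * Z y \<xi> + (1-1/2) * Z l \<xi> - \<epsilon>)"
        by (intro Bochner_Integration.integrable_diff Bochner_Integration.integrable_add
            integrable_mult_right intZ ynn lnn P.integrable_const)
      show "\<And>\<xi>. \<xi> \<in> space M \<Longrightarrow> Z m \<xi> \<le> 1/2 * Z y \<xi> + (1-1/2) * Z l \<xi> - \<epsilon>" by (rule pt)
    qed
    also have "\<dots> = 1/2 * \<Phi> y + (1-1/2) * \<Phi> l - \<epsilon>"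
    proof -
      have iy: "integrable M (Z y)" and il: "integrable M (Z l)" using intZ ynn lnn by auto
      have i3: "integrable M (\<lambda>\<xi>. 1/2 * Z y \<xi> + (1-1/2) * Z l \<xi>)" using iy il by auto
      have "integral\<^sup>L M (\<lambda>\<xi>. 1/2 * Z y \<xi> + (1-1/2) * Z l \<xi> - \<epsilon>)
          = integral\<^sup>L M (\<lambda>\<xi>. 1/2 * Z y \<xi> + (1-1/2) * Z l \<xi>) - integral\<^sup>L M (\<lambda>\<xi>. \<epsilon>)"
        by (rule Bochner_Integration.integral_diff[OF i3 P.integrable_const])
      also have "integral\<^sup>L M (\<lambda>\<xi>. 1/2 * Z y \<xi> + (1-1/2) * Z l \<xi>)
          = integral\<^sup>L M (\<lambda>\<xi>. 1/2 * Z y \<xi>) + integral\<^sup>L M (\<lambda>\<xi>. (1-1/2) * Z l \<xi>)"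
        by (rule Bochner_Integration.integral_add) (use iy il in auto)
      also have "integral\<^sup>L M (\<lambda>\<xi>. \<epsilon>) = \<epsilon>" by (simp add: P.prob_space)
      finally show ?thesis unfolding \<Phi>_def by (simp only: integral_mult_right_zero)
    qed
    finally have "\<Phi> m \<le> 1/2 * \<Phi> y + (1-1/2) * \<Phi> l - \<epsilon>" .
    moreover have "\<Phi> y \<le> \<Phi> l" using ymin lF by auto
    moreover have "\<Phi> l \<le> \<Phi> m" using lmin mF by auto
    ultimately show False using \<open>0 < \<epsilon>\<close> by simp
  qed
  have "\<exists>!f. (\<forall>p. p \<notin> Sigma W K \<longrightarrow> f p = 0)
                 \<and> (\<forall>w\<in>W. (\<Sum>k\<in>K w. f (w, k)) = q w)
                 \<and> (\<forall>p\<in>Sigma W K. f p \<ge> 0)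
                 \<and> (\<forall>g. (\<forall>p. p \<notin> Sigma W K \<longrightarrow> g p = 0)
                        \<and> (\<forall>w\<in>W. (\<Sum>k\<in>K w. g (w, k)) = q w)
                        \<and> (\<forall>p\<in>Sigma W K. g p \<ge> 0)
                        \<longrightarrow> \<Phi> f \<le> \<Phi> g)"
  proof (rule ex1I[of _ l])
    show "(\<forall>p. p \<notin> Sigma W K \<longrightarrow> l p = 0) \<and> (\<forall>w\<in>W. (\<Sum>k\<in>K w. l (w, k)) = q w)
      \<and> (\<forall>p\<in>Sigma W K. l p \<ge> 0) \<and> (\<forall>g. (\<forall>p. p \<notin> Sigma W K \<longrightarrow> g p = 0)
                        \<and> (\<forall>w\<in>W. (\<Sum>k\<in>K w. g (w, k)) = q w)
                        \<and> (\<forall>p\<in>Sigma W K. g p \<ge> 0) \<longrightarrow> \<Phi> l \<le> \<Phi> g)"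
      using lF lmin unfolding Fs_def by blast
  next
    fix y assume "(\<forall>p. p \<notin> Sigma W K \<longrightarrow> y p = 0) \<and> (\<forall>w\<in>W. (\<Sum>k\<in>K w. y (w, k)) = q w)
      \<and> (\<forall>p\<in>Sigma W K. y p \<ge> 0) \<and> (\<forall>g. (\<forall>p. p \<notin> Sigma W K \<longrightarrow> g p = 0)
                        \<and> (\<forall>w\<in>W. (\<Sum>k\<in>K w. g (w, k)) = q w)
                        \<and> (\<forall>p\<in>Sigma W K. g p \<ge> 0) \<longrightarrow> \<Phi> y \<le> \<Phi> g)"
    then show "y = l" using uniq unfolding Fs_def by blast
  qed
  with conv show ?thesis unfolding \<Phi>_def Z_def by blast
qed


end
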